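(* If $(U,\le)$ is an ordered supertropical monoid ($\mathrm{OST}$-monoid), then $U$ is a semiring.
   Context: A supertropical monoid is a commutative monoid $(U,\cdot)$ with absorbing element $0$ and distinguished idempotent $e$ with $ex=0\Rightarrow x=0$, together with a total ordering $\le_M$ on $M:=eU$, compatible with multiplication and with $0$ least, making $M$ a bipotent semiring (addition $=\max$). Define on $U$: $x+y:=y$ if $ex<ey$, $x$ if $ex>ey$, $ex$ if $ex=ey$; $U$ is a semiring if this addition is associative and distributive. An OST-monoid is a supertropical monoid $U$ with a total ordering $\le$ on the set $U$ such that: (OST1) $x\le y\Rightarrow xz\le yz$; (OST2) for $x,y\in M$, $x\le y\Leftrightarrow x\le_M y$; (OST3) $0\le1\le e$. *)

theory Defs
  imports Main
begin

text \<open>The supertropical monoid U is modelled as a whole type 'a, with multiplication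
  mult, unit one, absorbing element zero, the distinguished idempotent e, the
  ordering leM on M = eU, and (for OST-monoids) a total ordering le on U.\<close>

definition ghostM :: "('a \<Rightarrow> 'a \<Rightarrow> 'a) \<Rightarrow> 'a \<Rightarrow> 'a set" where
  "ghostM mult e = {mult e x | x. True}"

definition supertropical_monoid ::
  "('a \<Rightarrow> 'a \<Rightarrow> 'a) \<Rightarrow> 'a \<Rightarrow> 'a \<Rightarrow> 'a \<Rightarrow> ('a \<Rightarrow> 'a \<Rightarrow> bool) \<Rightarrow> bool" where
  "supertropical_monoid mult one zero e leM \<longleftrightarrow>
     \<comment> \<open>commutative monoid\<close>
     (\<forall>x y z. mult (mult x y) z = mult x (mult y z)) \<and>
     (\<forall>x y. mult x y = mult y x) \<and>
     (\<forall>x. mult one x = x) \<and>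
     \<comment> \<open>absorbing zero\<close>
     (\<forall>x. mult zero x = zero) \<and>
     \<comment> \<open>idempotent e with ex = 0 implies x = 0\<close>
     mult e e = e \<and>
     (\<forall>x. mult e x = zero \<longrightarrow> x = zero) \<and>
     \<comment> \<open>total ordering on M = eU\<close>
     (\<forall>x\<in>ghostM mult e. leM x x) \<and>
     (\<forall>x\<in>ghostM mult e. \<forall>y\<in>ghostM mult e. leM x y \<and> leM y x \<longrightarrow> x = y) \<and>
     (\<forall>x\<in>ghostM mult e. \<forall>y\<in>ghostM mult e. \<forall>z\<in>ghostM mult e.
        leM x y \<and> leM y z \<longrightarrow> leM x z) \<and>
     (\<forall>x\<in>ghostM mult e. \<forall>y\<in>ghostM mult e. leM x y \<or> leM y x) \<and>
     \<comment> \<open>compatible with multiplication\<close>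
     (\<forall>x\<in>ghostM mult e. \<forall>y\<in>ghostM mult e. \<forall>z\<in>ghostM mult e.
        leM x y \<longrightarrow> leM (mult x z) (mult y z)) \<and>
     \<comment> \<open>0 is least\<close>
     (\<forall>x\<in>ghostM mult e. leM zero x)"

definition st_add :: "('a \<Rightarrow> 'a \<Rightarrow> 'a) \<Rightarrow> 'a \<Rightarrow> ('a \<Rightarrow> 'a \<Rightarrow> bool) \<Rightarrow> 'a \<Rightarrow> 'a \<Rightarrow> 'a" where
  "st_add mult e leM x y =
     (if leM (mult e x) (mult e y) \<and> mult e x \<noteq> mult e y then y
      else if leM (mult e y) (mult e x) \<and> mult e x \<noteq> mult e y then x
      else mult e x)"

definition st_is_semiring :: "('a \<Rightarrow> 'a \<Rightarrow> 'a) \<Rightarrow> 'a \<Rightarrow> ('a \<Rightarrow> 'a \<Rightarrow> bool) \<Rightarrow> bool" where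
  "st_is_semiring mult e leM \<longleftrightarrow>
     (\<forall>x y z. st_add mult e leM (st_add mult e leM x y) z
              = st_add mult e leM x (st_add mult e leM y z)) \<and>
     (\<forall>x y z. mult x (st_add mult e leM y z)
              = st_add mult e leM (mult x y) (mult x z)) \<and>
     (\<forall>x y z. mult (st_add mult e leM x y) z
              = st_add mult e leM (mult x z) (mult y z))"

definition OST_monoid ::
  "('a \<Rightarrow> 'a \<Rightarrow> 'a) \<Rightarrow> 'a \<Rightarrow> 'a \<Rightarrow> 'a \<Rightarrow> ('a \<Rightarrow> 'a \<Rightarrow> bool) \<Rightarrow> ('a \<Rightarrow> 'a \<Rightarrow> bool) \<Rightarrow> bool" where
  "OST_monoid mult one zero e leM le \<longleftrightarrow>
     supertropical_monoid mult one zero e leM \<and>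
     \<comment> \<open>le is a total ordering on U\<close>
     (\<forall>x. le x x) \<and>
     (\<forall>x y. le x y \<and> le y x \<longrightarrow> x = y) \<and>
     (\<forall>x y z. le x y \<and> le y z \<longrightarrow> le x z) \<and>
     (\<forall>x y. le x y \<or> le y x) \<and>
     \<comment> \<open>OST1\<close>
     (\<forall>x y z. le x y \<longrightarrow> le (mult x z) (mult y z)) \<and>
     \<comment> \<open>OST2\<close>
     (\<forall>x\<in>ghostM mult e. \<forall>y\<in>ghostM mult e. le x y \<longleftrightarrow> leM x y) \<and>
     \<comment> \<open>OST3\<close>
     le zero one \<and> le one e"

end

theory Submission
  imports Defs
begin

locale ostl =
  fixes mult :: "'a \<Rightarrow> 'a \<Rightarrow> 'a" and one zero e :: 'a
    and leM le :: "'a \<Rightarrow> 'a \<Rightarrow> bool"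
  assumes assoc: "\<And>x y z. mult (mult x y) z = mult x (mult y z)"
    and comm: "\<And>x y. mult x y = mult y x"
    and ee: "mult e e = e"
    and refl: "\<And>x. le x x"
    and anti: "\<And>x y. le x y \<Longrightarrow> le y x \<Longrightarrow> x = y"
    and trans: "\<And>x y z. le x y \<Longrightarrow> le y z \<Longrightarrow> le x z"
    and total: "\<And>x y. le x y \<or> le y x"
    and mono: "\<And>x y z. le x y \<Longrightarrow> le (mult x z) (mult y z)"
    and ost2: "\<And>x y. le (mult e x) (mult e y) \<longleftrightarrow> leM (mult e x) (mult e y)"
    and oneE: "le one e"
    and unit: "\<And>x. mult one x = x"
begin

abbreviation add where "add \<equiv> st_add mult e leM"

lemma add_eq: "add x y = (if le (mult e x) (mult e y) \<and> mult e x \<noteq> mult e y then y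
      else if le (mult e y) (mult e x) \<and> mult e x \<noteq> mult e y then x
      else mult e x)"
  unfolding st_add_def using ost2 by simp

lemma eex: "mult e (mult e x) = mult e x"
  by (metis assoc ee)

lemma e_add: "mult e (add x y) = (if le (mult e x) (mult e y) then mult e y else mult e x)"
  using anti by (auto simp: add_eq eex)

lemma le_ex: "le x (mult e x)"
  using mono[OF oneE, of x] unit comm by metis

lemma add_assoc: "add (add x y) z = add x (add y z)"
proof -
  let ?a = "mult e x" and ?b = "mult e y" and ?c = "mult e z"
  have a: "mult e (add x y) = (if le ?a ?b then ?b else ?a)" by (rule e_add)
  have b: "mult e (add y z) = (if le ?b ?c then ?c else ?b)" by (rule e_add)
  have t: "le ?a ?b \<or> le ?b ?a" "le ?b ?c \<or> le ?c ?b" "le ?a ?c \<or> le ?c ?a" using total by blast+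
  have an: "le ?a ?b \<Longrightarrow> le ?b ?a \<Longrightarrow> ?a = ?b" "le ?c ?b \<Longrightarrow> le ?b ?c \<Longrightarrow> ?c = ?b"
     "le ?a ?c \<Longrightarrow> le ?c ?a \<Longrightarrow> ?a = ?c" using anti by blast+
  have tr: "le ?a ?b \<Longrightarrow> le ?b ?c \<Longrightarrow> le ?a ?c" "le ?c ?b \<Longrightarrow> le ?b ?a \<Longrightarrow> le ?c ?a"
     "le ?b ?a \<Longrightarrow> le ?a ?c \<Longrightarrow> le ?b ?c" "le ?c ?a \<Longrightarrow> le ?a ?b \<Longrightarrow> le ?c ?b"
     "le ?a ?c \<Longrightarrow> le ?c ?b \<Longrightarrow> le ?a ?b" "le ?b ?c \<Longrightarrow> le ?c ?a \<Longrightarrow> le ?b ?a"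
    using trans by blast+
  have r: "le ?a ?a" "le ?b ?b" "le ?c ?c" using refl by blast+
  show ?thesis
    unfolding add_eq[of "add x y" z] add_eq[of x "add y z"] a b
    apply (cases "le ?a ?b"; cases "le ?b ?c"; cases "le ?a ?c"; cases "?a = ?b"; cases "?b = ?c"; cases "?a = ?c")
    apply (simp_all add: add_eq eex)
    apply (use t an tr r in metis)+
    done
qed

lemma key: assumes "le (mult e y) (mult e z)" "mult e y \<noteq> mult e z"
  shows "le (mult e y) z"
proof (rule ccontr)
  assume "\<not> le (mult e y) z"
  hence "le z (mult e y)" using total by blast
  hence "le (mult e z) (mult e y)" using mono[of z "mult e y" e] comm eex by metis
  thus False using assms anti by blast
qed

lemma distr: "mult x (add y z) = add (mult x y) (mult x z)"
proof -
  have c1: "mult e (mult x y) = mult x (mult e y)" "mult e (mult x z) = mult x (mult e z)"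
    by (metis assoc comm)+
  have monl: "\<And>a b. le a b \<Longrightarrow> le (mult x a) (mult x b)" using mono comm by metis
  consider "le (mult e y) (mult e z) \<and> mult e y \<noteq> mult e z"
    | "le (mult e z) (mult e y) \<and> mult e y \<noteq> mult e z"
    | "mult e y = mult e z" using total by blast
  then show ?thesis
  proof cases
    case 1
    hence s: "add y z = z" by (simp add: add_eq)
    have k: "le (mult e y) z" using key 1 by blast
    have m1: "le (mult x (mult e y)) (mult x z)" using monl[OF k] .
    have m2: "le (mult x z) (mult x (mult e z))" using le_ex c1 by metis
    have m3: "le (mult x (mult e y)) (mult x (mult e z))" using monl 1 by blast
    show ?thesis
    proof (cases "mult x (mult e y) = mult x (mult e z)")
      case True
      hence "mult x z = mult e (mult x z)" using m1 m2 c1 anti by metis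
      thus ?thesis using s True c1 by (simp add: add_eq)
    next
      case False
      thus ?thesis using s m3 c1 by (simp add: add_eq)
    qed
  next
    case 2
    hence s: "add y z = y" using anti by (auto simp add: add_eq)
    have k: "le (mult e z) y" using key[of z y] 2 by auto
    have m1: "le (mult x (mult e z)) (mult x y)" using monl[OF k] .
    have m2: "le (mult x y) (mult x (mult e y))" using le_ex c1 by metis
    have m3: "le (mult x (mult e z)) (mult x (mult e y))" using monl 2 by blast
    show ?thesis
    proof (cases "mult x (mult e y) = mult x (mult e z)")
      case True
      hence "mult x y = mult e (mult x y)" using m1 m2 c1 anti by metis
      thus ?thesis using s True c1 by (simp add: add_eq)
    next
      case False
      thus ?thesis using s m3 c1 anti by (auto simp add: add_eq)
    qed
  next
    case 3
    hence "add y z = mult e y" by (simp add: add_eq)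
    thus ?thesis using 3 c1 by (simp add: add_eq comm assoc)
  qed
qed

end

theorem theorem61p4:
  fixes mult :: "'a \<Rightarrow> 'a \<Rightarrow> 'a" and one zero e :: 'a
    and leM le :: "'a \<Rightarrow> 'a \<Rightarrow> bool"
  assumes "OST_monoid mult one zero e leM le"
  shows "st_is_semiring mult e leM"
proof -
  have g: "\<And>x. mult e x \<in> ghostM mult e" unfolding ghostM_def by blast
  have A: "supertropical_monoid mult one zero e leM" "\<And>x. le x x" "\<And>x y. le x y \<and> le y x \<longrightarrow> x = y"
    "\<And>x y z. le x y \<and> le y z \<longrightarrow> le x z" "\<And>x y. le x y \<or> le y x"
    "\<And>x y z. le x y \<longrightarrow> le (mult x z) (mult y z)"
    "\<forall>x\<in>ghostM mult e. \<forall>y\<in>ghostM mult e. le x y \<longleftrightarrow> leM x y" "le one e"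
    using assms unfolding OST_monoid_def by blast+
  have B: "\<And>x y z. mult (mult x y) z = mult x (mult y z)" "\<And>x y. mult x y = mult y x"
     "\<And>x. mult one x = x" "mult e e = e"
    using A(1) unfolding supertropical_monoid_def by blast+
  have ost2: "\<And>x y. le (mult e x) (mult e y) = leM (mult e x) (mult e y)" using A(7) g by blast
  have an: "\<And>x y. le x y \<Longrightarrow> le y x \<Longrightarrow> x = y" using A(3) by blast
  have tr: "\<And>x y z. le x y \<Longrightarrow> le y z \<Longrightarrow> le x z" using A(4) by blast
  have mo: "\<And>x y z. le x y \<Longrightarrow> le (mult x z) (mult y z)" using A(6) by blast
  interpret ostl mult one zero e leM le
    by (rule ostl.intro[OF B(1) B(2) B(4) A(2) an tr A(5) mo ost2 A(8) B(3)])
  show ?thesis unfolding st_is_semiring_def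
  proof (intro conjI allI)
    fix x y z
    show "add (add x y) z = add x (add y z)" by (rule add_assoc)
    show "mult x (add y z) = add (mult x y) (mult x z)" by (rule distr)
    show "mult (add x y) z = add (mult x z) (mult y z)" using distr[of z x y] comm by metis
  qed
qed

end
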